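(* Let $N\in\mathbb N$, $\sigma>0$, $\theta,\gamma\ge0$, let $H^N$ be a stochastic process with the dynamics described in the context and for $x>0$ let $S^N_x=\inf\{s:\Lambda^N_s(0)\ge\lfloor Nx\rfloor/N\}$. Then $S^N_x\to\infty$ almost surely as $x\to\infty$.
   Context: $H^N=(H^N_s)_{s\ge0}$ is continuous, piecewise linear with slopes $\pm2N$, starts at $0$ with slope $2N$; while moving upwards its slope jumps from $2N$ to $-2N$ at rate $N^2\sigma^2+4\gamma N\Lambda^N_s(H^N_s)$; while moving downwards its slope jumps from $-2N$ to $2N$ at rate $N^2\sigma^2+2N\theta$; whenever it reaches $0$ it is reflected above $0$. $\Lambda^N_s(t)$ is $\frac1{2N}$ times the number of $t$-crossings of $H^N$ between times $0$ and $s$, a local minimum at level $t$ counting as two crossings and a local maximum as none. *)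

theory Defs
  imports "HOL-Probability.Probability"
begin

text \<open>Pathwise construction of the piecewise linear process H^N from a sequence
 e of (i.i.d. standard exponential) clock variables.  Segment k runs from the
 turning point (T k, Y k) to (T (Suc k), Y (Suc k)); even segments go up with
 slope 2N, odd segments go down with slope -2N.\<close>

definition seg_slope :: "nat \<Rightarrow> nat \<Rightarrow> real" where
  "seg_slope N k = (if even k then 2 * real N else - 2 * real N)"

text \<open>The path made of segments 0..n, where the last segment n is continued
 indefinitely with its slope.\<close>
definition pathn :: "nat \<Rightarrow> nat \<Rightarrow> (nat \<Rightarrow> real) \<Rightarrow> (nat \<Rightarrow> real) \<Rightarrow> real \<Rightarrow> real" where
  "pathn N n T Y s =
     (let k = (if \<exists>j<n. s < T (Suc j) then (LEAST j. s < T (Suc j)) else n)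
      in Y k + seg_slope N k * (s - T k))"

text \<open>Local minima / maxima of a path on [0,\<infinity>) and the crossing weights
 (local minimum = two crossings, local maximum = none, otherwise one).\<close>
definition loc_min :: "(real \<Rightarrow> real) \<Rightarrow> real \<Rightarrow> bool" where
  "loc_min h r = (\<exists>\<epsilon>>0. \<forall>r'. 0 \<le> r' \<and> \<bar>r' - r\<bar> < \<epsilon> \<longrightarrow> h r \<le> h r')"

definition loc_max :: "(real \<Rightarrow> real) \<Rightarrow> real \<Rightarrow> bool" where
  "loc_max h r = (\<exists>\<epsilon>>0. \<forall>r'. 0 \<le> r' \<and> \<bar>r' - r\<bar> < \<epsilon> \<longrightarrow> h r' \<le> h r)"

definition cross_weight :: "(real \<Rightarrow> real) \<Rightarrow> real \<Rightarrow> real" where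
  "cross_weight h r = (if loc_min h r then 2 else if loc_max h r then 0 else 1)"

definition Lam :: "nat \<Rightarrow> (real \<Rightarrow> real) \<Rightarrow> real \<Rightarrow> real \<Rightarrow> real" where
  "Lam N h s t = (1 / (2 * real N)) * (\<Sum>r \<in> {r. 0 \<le> r \<and> r < s \<and> h r = t}. cross_weight h r)"

text \<open>Down segment: turns at rate N^2 sigma^2 + 2 N theta, or is reflected when hitting 0.\<close>
definition next_pt :: "nat \<Rightarrow> real \<Rightarrow> real \<Rightarrow> real \<Rightarrow> nat \<Rightarrow> (nat \<Rightarrow> real) \<Rightarrow> (nat \<Rightarrow> real)
    \<Rightarrow> real \<Rightarrow> real \<times> real" where
  "next_pt N \<sigma> \<theta> \<gamma> k T Y ek =
    (if even k then
       (let h = pathn N k T Y;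
            rate = (\<lambda>u. (real N)\<^sup>2 * \<sigma>\<^sup>2 + 4 * \<gamma> * real N * Lam N h (T k + u) (Y k + 2 * real N * u));
            u = Inf {u. 0 \<le> u \<and> ek \<le> integral {0..u} rate}
        in (T k + u, Y k + 2 * real N * u))
     else
       (let u = min (ek / ((real N)\<^sup>2 * \<sigma>\<^sup>2 + 2 * real N * \<theta>)) (Y k / (2 * real N))
        in (T k + u, Y k - 2 * real N * u)))"

primrec turn_pts :: "nat \<Rightarrow> real \<Rightarrow> real \<Rightarrow> real \<Rightarrow> (nat \<Rightarrow> real) \<Rightarrow> nat \<Rightarrow> (nat \<Rightarrow> real \<times> real)" where
  "turn_pts N \<sigma> \<theta> \<gamma> e 0 = (\<lambda>_. (0, 0))"
| "turn_pts N \<sigma> \<theta> \<gamma> e (Suc k) =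
     (let P = turn_pts N \<sigma> \<theta> \<gamma> e k
      in P(Suc k := next_pt N \<sigma> \<theta> \<gamma> k (fst \<circ> P) (snd \<circ> P) (e k)))"

definition Tsw :: "nat \<Rightarrow> real \<Rightarrow> real \<Rightarrow> real \<Rightarrow> (nat \<Rightarrow> real) \<Rightarrow> nat \<Rightarrow> real" where
  "Tsw N \<sigma> \<theta> \<gamma> e k = fst (turn_pts N \<sigma> \<theta> \<gamma> e k k)"

definition Ysw :: "nat \<Rightarrow> real \<Rightarrow> real \<Rightarrow> real \<Rightarrow> (nat \<Rightarrow> real) \<Rightarrow> nat \<Rightarrow> real" where
  "Ysw N \<sigma> \<theta> \<gamma> e k = snd (turn_pts N \<sigma> \<theta> \<gamma> e k k)"

text \<open>The process H^N (set to 0 after a possible explosion time).\<close>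
definition Hproc :: "nat \<Rightarrow> real \<Rightarrow> real \<Rightarrow> real \<Rightarrow> (nat \<Rightarrow> real) \<Rightarrow> real \<Rightarrow> real" where
  "Hproc N \<sigma> \<theta> \<gamma> e s =
     (if \<exists>n. s < Tsw N \<sigma> \<theta> \<gamma> e n
      then pathn N (LEAST n. s < Tsw N \<sigma> \<theta> \<gamma> e n) (Tsw N \<sigma> \<theta> \<gamma> e) (Ysw N \<sigma> \<theta> \<gamma> e) s
      else 0)"

text \<open>S^N_x = inf{s. Lambda^N_s(0) \<ge> floor(N x)/N}, in ereal (inf of empty set = \<infinity>).\<close>
definition S_hit :: "nat \<Rightarrow> real \<Rightarrow> real \<Rightarrow> real \<Rightarrow> (nat \<Rightarrow> real) \<Rightarrow> real \<Rightarrow> ereal" where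
  "S_hit N \<sigma> \<theta> \<gamma> e x =
     Inf (ereal ` {s. 0 \<le> s \<and> real_of_int \<lfloor>real N * x\<rfloor> / real N \<le> Lam N (Hproc N \<sigma> \<theta> \<gamma> e) s 0})"

end

theory Submission
  imports Defs
begin



lemma turn_pts_eq:
  "turn_pts N \<sigma> \<theta> \<gamma> e k j = (if j \<le> k then turn_pts N \<sigma> \<theta> \<gamma> e j j else (0,0))"
proof (induction k arbitrary: j)
  case 0
  then show ?case by simp
next
  case (Suc k)
  show ?case
  proof (cases "j = Suc k")
    case True then show ?thesis by simp
  next
    case False
    then show ?thesis using Suc[of j] by (simp add: Let_def)
  qed
qed

lemma pathn_cong:
  assumes "\<forall>j\<le>n. T j = T' j \<and> Y j = Y' j"
  shows "pathn N n T Y = pathn N n T' Y'"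
proof
  fix s
  have ex: "(\<exists>j<n. s < T (Suc j)) = (\<exists>j<n. s < T' (Suc j))"
    using assms by (metis Suc_leI)
  show "pathn N n T Y s = pathn N n T' Y' s"
  proof (cases "\<exists>j<n. s < T (Suc j)")
    case True
    then obtain j0 where j0: "j0 < n" "s < T (Suc j0)" by blast
    define L where "L = (LEAST j. s < T (Suc j))"
    have L1: "s < T (Suc L)" unfolding L_def by (rule LeastI[of _ j0]) (rule j0(2))
    have L2: "L \<le> j0" unfolding L_def by (rule Least_le) (rule j0(2))
    have Lm: "\<And>i. i < L \<Longrightarrow> \<not> s < T (Suc i)" unfolding L_def by (rule not_less_Least)
    have "(LEAST j. s < T' (Suc j)) = L"
    proof (rule Least_equality)
      show "s < T' (Suc L)" using L1 L2 j0 assms by (metis Suc_leI le_less_trans)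
      show "\<And>y. s < T' (Suc y) \<Longrightarrow> L \<le> y"
        using Lm L2 j0 assms by (metis Suc_leI le_less_trans not_le_imp_less order_less_imp_le)
    qed
    moreover have "L \<le> n" using L2 j0 by simp
    ultimately show ?thesis using True ex assms unfolding pathn_def L_def[symmetric]
      by (simp add: Let_def seg_slope_def)
  next
    case False
    have F2: "\<not> (\<exists>j<n. s < T' (Suc j))" using False ex by simp
    show ?thesis using assms unfolding pathn_def by (simp only: Let_def False F2 if_False)
  qed
qed

lemma next_pt_cong:
  assumes "\<forall>j\<le>k. T j = T' j \<and> Y j = Y' j"
  shows "next_pt N \<sigma> \<theta> \<gamma> k T Y ek = next_pt N \<sigma> \<theta> \<gamma> k T' Y' ek"
  using pathn_cong[OF assms, of N] assms unfolding next_pt_def by (simp add: Let_def)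

lemma TY_rec:
  "(Tsw N \<sigma> \<theta> \<gamma> e (Suc k), Ysw N \<sigma> \<theta> \<gamma> e (Suc k)) =
     next_pt N \<sigma> \<theta> \<gamma> k (Tsw N \<sigma> \<theta> \<gamma> e) (Ysw N \<sigma> \<theta> \<gamma> e) (e k)"
proof -
  let ?P = "turn_pts N \<sigma> \<theta> \<gamma> e k"
  have "(Tsw N \<sigma> \<theta> \<gamma> e (Suc k), Ysw N \<sigma> \<theta> \<gamma> e (Suc k)) = turn_pts N \<sigma> \<theta> \<gamma> e (Suc k) (Suc k)"
    by (simp add: Tsw_def Ysw_def)
  also have "\<dots> = next_pt N \<sigma> \<theta> \<gamma> k (fst \<circ> ?P) (snd \<circ> ?P) (e k)"
    by (simp add: Let_def)
  also have "\<dots> = next_pt N \<sigma> \<theta> \<gamma> k (Tsw N \<sigma> \<theta> \<gamma> e) (Ysw N \<sigma> \<theta> \<gamma> e) (e k)"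
    by (rule next_pt_cong) (simp add: Tsw_def Ysw_def turn_pts_eq[of N \<sigma> \<theta> \<gamma> e k])
  finally show ?thesis .
qed

lemma TY_0: "Tsw N \<sigma> \<theta> \<gamma> e 0 = 0" "Ysw N \<sigma> \<theta> \<gamma> e 0 = 0"
  by (simp_all add: Tsw_def Ysw_def)




lemma seg_slope_nz: "N \<ge> 1 \<Longrightarrow> seg_slope N k \<noteq> 0"
  by (simp add: seg_slope_def)

lemma pathn_shape: "\<exists>k\<le>n. pathn N n T Y s = Y k + seg_slope N k * (s - T k)"
proof (cases "\<exists>j<n. s < T (Suc j)")
  case True
  then obtain j0 where j0: "j0 < n" "s < T (Suc j0)" by blast
  have "(LEAST j. s < T (Suc j)) \<le> j0" by (rule Least_le) (rule j0(2))
  then show ?thesis using True j0 unfolding pathn_def Let_def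
    by (intro exI[of _ "LEAST j. s < T (Suc j)"]) simp
next
  case False
  show ?thesis unfolding pathn_def Let_def if_not_P[OF False] by (intro exI[of _ n]) simp
qed

lemma pathn_last:
  assumes "\<forall>j<n. T (Suc j) \<le> s"
  shows "pathn N n T Y s = Y n + seg_slope N n * (s - T n)"
proof -
  have nE: "\<not> (\<exists>j<n. s < T (Suc j))" using assms by (meson not_le)
  show ?thesis unfolding pathn_def Let_def if_not_P[OF nE] by (rule refl)
qed

lemma mono_upto:
  assumes "\<forall>j<n. T j \<le> T (Suc j)" "i \<le> j" "j \<le> n"
  shows "T i \<le> (T j :: real)"
  using assms(2,3)
proof (induction j)
  case 0 then show ?case by simp
next
  case (Suc j)
  show ?case
  proof (cases "i = Suc j")
    case True then show ?thesis by simp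
  next
    case False
    then have "T i \<le> T j" using Suc by simp
    also have "T j \<le> T (Suc j)" using assms(1) Suc.prems by simp
    finally show ?thesis .
  qed
qed

lemma pathn_seg:
  assumes mono: "\<forall>j<n. T j \<le> T (Suc j)" and j: "j < n" "T j \<le> s" "s < T (Suc j)"
  shows "pathn N n T Y s = Y j + seg_slope N j * (s - T j)"
proof -
  have L: "(LEAST i. s < T (Suc i)) = j"
  proof (rule Least_equality)
    show "s < T (Suc j)" by (rule j(3))
    fix y assume y: "s < T (Suc y)"
    show "j \<le> y"
    proof (rule ccontr)
      assume "\<not> j \<le> y"
      then have "Suc y \<le> j" by simp
      then have "T (Suc y) \<le> T j" using mono_upto[OF mono, of "Suc y" j] j by simp
      then show False using y j by simp
    qed
  qed
  have "\<exists>i<n. s < T (Suc i)" using j by blast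
  then show ?thesis unfolding pathn_def Let_def L by simp
qed

lemma seg_cover:
  fixes T :: "nat \<Rightarrow> real"
  assumes mono: "\<forall>j<n. T j \<le> T (Suc j)" and T0: "T 0 = 0" and s: "0 \<le> s" "s < T n"
  shows "\<exists>j<n. T j \<le> s \<and> s < T (Suc j)"
proof -
  have n: "n > 0" using s T0 by (cases n) auto
  then have w: "s < T (Suc (n - 1))" using s by simp
  define L where "L = (LEAST i. s < T (Suc i))"
  have L1: "s < T (Suc L)" unfolding L_def by (rule LeastI[of _ "n - 1"]) (rule w)
  have L2: "L \<le> n - 1" unfolding L_def by (rule Least_le) (rule w)
  have L3: "T L \<le> s"
  proof (cases L)
    case 0 then show ?thesis using T0 s by simp
  next
    case (Suc i)
    have "\<not> s < T (Suc i)" unfolding L_def[symmetric] using not_less_Least[of i "\<lambda>i. s < T (Suc i)"] Suc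
      unfolding L_def by simp
    then show ?thesis using Suc by simp
  qed
  show ?thesis using L1 L2 L3 n by (intro exI[of _ L]) auto
qed

lemma cw_interior:
  fixes h :: "real \<Rightarrow> real"
  assumes ab: "0 \<le> a" "a < r" "r < b" and lin: "\<And>x. a < x \<Longrightarrow> x < b \<Longrightarrow> h x = c + m * x"
    and m: "m \<noteq> 0"
  shows "cross_weight h r = 1"
proof -
  have key: False if P: "\<And>x. 0 \<le> x \<Longrightarrow> \<bar>x - r\<bar> < \<epsilon> \<Longrightarrow> R (h r) (h x)" and eps: "\<epsilon> > 0"
    and R: "\<And>u v w. R u v \<Longrightarrow> R u w \<Longrightarrow> u + u = v + w \<Longrightarrow> u = v" for \<epsilon> R
  proof -
    define d where "d = min \<epsilon> (min (r - a) (b - r)) / 2"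
    have d: "d > 0" "d < \<epsilon>" "d < r - a" "d < b - r" using eps ab by (auto simp: d_def)
    have h1: "h (r + d) = c + m * (r + d)" using d by (intro lin) auto
    have h2: "h (r - d) = c + m * (r - d)" using d by (intro lin) auto
    have h0: "h r = c + m * r" using ab by (intro lin) auto
    have "R (h r) (h (r + d))" using d ab by (intro P) auto
    moreover have "R (h r) (h (r - d))" using d ab by (intro P) auto
    moreover have "h r + h r = h (r + d) + h (r - d)" using h0 h1 h2 by (simp add: algebra_simps)
    ultimately have "h r = h (r + d)" by (rule R)
    then show False using h0 h1 m d by simp
  qed
  have "\<not> loc_min h r"
  proof
    assume "loc_min h r"
    then obtain \<epsilon> where "\<epsilon> > 0" "\<forall>r'. 0 \<le> r' \<and> \<bar>r' - r\<bar> < \<epsilon> \<longrightarrow> h r \<le> h r'"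
      unfolding loc_min_def by blast
    then show False using key[of \<epsilon> "(\<le>)"] by force
  qed
  moreover have "\<not> loc_max h r"
  proof
    assume "loc_max h r"
    then obtain \<epsilon> where "\<epsilon> > 0" "\<forall>r'. 0 \<le> r' \<and> \<bar>r' - r\<bar> < \<epsilon> \<longrightarrow> h r' \<le> h r"
      unfolding loc_max_def by blast
    then show False using key[of \<epsilon> "(\<ge>)"] by force
  qed
  ultimately show ?thesis unfolding cross_weight_def by simp
qed




lemma btw1:
  fixes s d D y t :: real
  assumes "s \<noteq> 0" "0 \<le> d" "d < D" "t = y + s * d" "t \<noteq> y"
  shows "min y (y + s * D) < t \<and> t < max y (y + s * D)"
proof -
  have d: "d > 0" using assms by (cases "d = 0") auto
  show ?thesis
  proof (cases "s > 0")
    case True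
    then have "s * d < s * D" using assms by simp
    moreover have "0 < s * d" using d True by simp
    ultimately show ?thesis using assms by auto
  next
    case False
    then have s: "s < 0" using assms by simp
    then have "s * D < s * d" using assms by simp
    moreover have "s * d < 0" using d s by (simp add: mult_neg_pos)
    ultimately show ?thesis using assms by auto
  qed
qed

lemma btw2:
  fixes s D y t :: real
  assumes "s \<noteq> 0" "0 \<le> D" "min y (y + s * D) < t" "t < max y (y + s * D)"
  shows "0 < (t - y) / s \<and> (t - y) / s < D"
proof (cases "s > 0")
  case True
  then have "0 \<le> s * D" using assms by simp
  then have "y < t" "t - y < s * D" using assms by auto
  then show ?thesis using True by (simp add: divide_less_eq mult.commute)
next
  case False
  then have s: "s < 0" using assms by simp
  then have "s * D \<le> 0" using assms by (simp add: mult_nonpos_nonneg)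
  then have "t < y" "s * D < t - y" using assms by auto
  then show ?thesis using s by (simp add: divide_less_eq mult.commute divide_pos_neg less_divide_eq)
qed




lemma lam_count:
  fixes T Y :: "nat \<Rightarrow> real"
  assumes N: "N \<ge> 1" and mono: "\<forall>j<k. T j \<le> T (Suc j)" and T0: "T 0 = 0" and ev: "even k"
    and u: "0 \<le> u" and t: "t = Y k + 2 * real N * u"
    and tY: "\<forall>j\<le>k. t \<noteq> Y j"
    and teY: "\<forall>j<k. t \<noteq> Y j + seg_slope N j * (T (Suc j) - T j)"
  shows "Lam N (pathn N k T Y) (T k + u) t =
     card {j. j < k \<and> min (Y j) (Y j + seg_slope N j * (T (Suc j) - T j)) < t
                   \<and> t < max (Y j) (Y j + seg_slope N j * (T (Suc j) - T j))} / (2 * real N)"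
proof -
  define h where "h = pathn N k T Y"
  define sl where "sl = seg_slope N"
  define J where "J = {j. j < k \<and> min (Y j) (Y j + sl j * (T (Suc j) - T j)) < t
                   \<and> t < max (Y j) (Y j + sl j * (T (Suc j) - T j))}"
  define Z where "Z = {r. 0 \<le> r \<and> r < T k + u \<and> h r = t}"
  define \<rho> where "\<rho> j = T j + (t - Y j) / sl j" for j
  have slnz: "sl j \<noteq> 0" for j using N by (simp add: sl_def seg_slope_def)
  have Tle: "T i \<le> T j" if "i \<le> j" "j \<le> k" for i j using mono_upto[OF mono that] .
  have Tnn: "0 \<le> T j" if "j \<le> k" for j using Tle[of 0 j] that T0 by simp
  have inter: "T j < \<rho> j \<and> \<rho> j < T (Suc j)" if "j \<in> J" for j
  proof -
    have D: "0 \<le> T (Suc j) - T j" using mono that by (simp add: J_def)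
    have "0 < (t - Y j) / sl j \<and> (t - Y j) / sl j < T (Suc j) - T j"
      using btw2[OF slnz D] that by (simp add: J_def)
    then show ?thesis by (simp add: \<rho>_def)
  qed
  have hseg: "h x = Y j + sl j * (x - T j)" if "j < k" "T j \<le> x" "x < T (Suc j)" for j x
    unfolding h_def sl_def using pathn_seg[OF mono that] .
  have hrho: "h (\<rho> j) = t" if "j \<in> J" for j
  proof -
    have "h (\<rho> j) = Y j + sl j * (\<rho> j - T j)"
      using inter[OF that] that by (intro hseg) (auto simp: J_def)
    then show ?thesis using slnz[of j] by (simp add: \<rho>_def)
  qed
  have ZJ: "Z = \<rho> ` J"
  proof
    show "\<rho> ` J \<subseteq> Z"
    proof
      fix r assume "r \<in> \<rho> ` J"
      then obtain j where j: "j \<in> J" "r = \<rho> j" by blast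
      have jk: "j < k" using j by (simp add: J_def)
      have "0 \<le> T j" using Tnn jk by simp
      moreover have "T (Suc j) \<le> T k" using Tle[of "Suc j" k] jk by simp
      ultimately show "r \<in> Z" using inter[OF j(1)] hrho[OF j(1)] j u by (auto simp: Z_def)
    qed
  next
    show "Z \<subseteq> \<rho> ` J"
    proof
      fix r assume r: "r \<in> Z"
      show "r \<in> \<rho> ` J"
      proof (cases "T k \<le> r")
        case True
        have "\<forall>j<k. T (Suc j) \<le> r"
        proof (intro allI impI)
          fix j assume "j < k"
          then have "T (Suc j) \<le> T k" using Tle[of "Suc j" k] by simp
          then show "T (Suc j) \<le> r" using True by simp
        qed
        then have "h r = Y k + sl k * (r - T k)" unfolding h_def sl_def by (rule pathn_last)
        then have "h r = Y k + 2 * real N * (r - T k)" using ev by (simp add: sl_def seg_slope_def)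
        then have "r - T k = u" using r t N by (auto simp: Z_def)
        then show ?thesis using r by (simp add: Z_def)
      next
        case False
        then obtain j where j: "j < k" "T j \<le> r" "r < T (Suc j)"
          using seg_cover[OF mono T0, of r] r by (auto simp: Z_def)
        have hr: "t = Y j + sl j * (r - T j)" using hseg[OF j] r by (simp add: Z_def)
        have "t \<noteq> Y j" using tY j by simp
        then have "min (Y j) (Y j + sl j * (T (Suc j) - T j)) < t \<and> t < max (Y j) (Y j + sl j * (T (Suc j) - T j))"
          using btw1[OF slnz, of "r - T j" "T (Suc j) - T j" t "Y j"] j hr by simp
        then have jJ: "j \<in> J" using j by (simp add: J_def)
        have "r = \<rho> j" using hr slnz[of j] by (simp add: \<rho>_def)
        then show ?thesis using jJ by blast
      qed
    qed
  qed
  have inj: "inj_on \<rho> J"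
  proof (rule inj_onI)
    have lt: "\<rho> i < \<rho> j" if "i \<in> J" "j \<in> J" "i < j" for i j
    proof -
      have "j < k" using that by (simp add: J_def)
      then have "T (Suc i) \<le> T j" using Tle[of "Suc i" j] that by simp
      then show ?thesis using inter[OF that(1)] inter[OF that(2)] by simp
    qed
    fix i j assume "i \<in> J" "j \<in> J" "\<rho> i = \<rho> j"
    then show "i = j" using lt by (metis less_irrefl linorder_neqE_nat)
  qed
  have finJ: "finite J" by (simp add: J_def)
  have cw: "cross_weight h r = 1" if rZ: "r \<in> Z" for r
  proof -
    obtain j where j: "j \<in> J" "r = \<rho> j" using rZ ZJ by blast
    have jk: "j < k" using j by (simp add: J_def)
    show ?thesis
    proof (rule cw_interior[where a = "T j" and b = "T (Suc j)" and c = "Y j - sl j * T j" and m = "sl j"])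
      show "0 \<le> T j" using Tnn jk by simp
      show "T j < r" "r < T (Suc j)" using inter[OF j(1)] j by auto
      show "sl j \<noteq> 0" by (rule slnz)
      fix x assume "T j < x" "x < T (Suc j)"
      then show "h x = Y j - sl j * T j + sl j * x" using hseg[OF jk] by (simp add: algebra_simps)
    qed
  qed
  have "Lam N h (T k + u) t = (1 / (2 * real N)) * (\<Sum>r\<in>Z. cross_weight h r)"
    by (simp add: Lam_def Z_def)
  also have "(\<Sum>r\<in>Z. cross_weight h r) = (\<Sum>r\<in>Z. 1)" using cw by simp
  also have "\<dots> = card Z" by simp
  also have "card Z = card J" using ZJ inj card_image by blast
  finally show ?thesis by (simp add: h_def J_def sl_def)
qed




lemma card_filter_sum: fixes k :: nat shows "real (card {j. j < k \<and> P j}) = (\<Sum>j<k. if P j then 1 else 0)"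
proof (induction k)
  case 0 then show ?case by simp
next
  case (Suc k)
  have "{j. j < Suc k \<and> P j} = {j. j < k \<and> P j} \<union> (if P k then {k} else {})"
    by (auto simp: less_Suc_eq)
  then show ?case using Suc by (simp add: card_insert_if)
qed


lemma rate_integral:
  fixes T Y :: "nat \<Rightarrow> real"
  assumes N: "N \<ge> 1" and mono: "\<forall>j<k. T j \<le> T (Suc j)" and T0: "T 0 = 0" and ev: "even k"
    and \<sigma>: "\<sigma> > 0" and \<gamma>: "\<gamma> \<ge> 0" and v: "0 \<le> v"
  defines "rate \<equiv> (\<lambda>u. (real N)\<^sup>2 * \<sigma>\<^sup>2 + 4 * \<gamma> * real N * Lam N (pathn N k T Y) (T k + u) (Y k + 2 * real N * u))"
  shows "(real N)\<^sup>2 * \<sigma>\<^sup>2 * v \<le> integral {0..v} rate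
       \<and> integral {0..v} rate \<le> ((real N)\<^sup>2 * \<sigma>\<^sup>2 + 2 * \<gamma> * real k) * v"
proof -
  define A where "A = (real N)\<^sup>2 * \<sigma>\<^sup>2"
  define C where "C = A + 2 * \<gamma> * real k"
  define eY where "eY j = Y j + seg_slope N j * (T (Suc j) - T j)" for j
  define a where "a j = (min (Y j) (eY j) - Y k) / (2 * real N)" for j
  define b where "b j = (max (Y j) (eY j) - Y k) / (2 * real N)" for j
  define g where "g u = A + 2 * \<gamma> * (\<Sum>j<k. indicat_real {a j<..<b j} u)" for u
  define F where "F = (\<lambda>y. (y - Y k) / (2 * real N)) ` (Y ` {..k} \<union> eY ` {..<k})"
  have Npos: "real N > 0" using N by simp
  have finF: "finite F" by (simp add: F_def)
  have iff: "(min (Y j) (eY j) < Y k + 2 * real N * u \<and> Y k + 2 * real N * u < max (Y j) (eY j))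
      \<longleftrightarrow> u \<in> {a j<..<b j}" for j u
    using Npos by (auto simp: a_def b_def field_simps)
  have eq: "rate u = g u" if u: "u \<in> {0..v} - F" for u
  proof -
    have tY: "\<forall>j\<le>k. Y k + 2 * real N * u \<noteq> Y j"
    proof (intro allI impI notI)
      fix j assume "j \<le> k" "Y k + 2 * real N * u = Y j"
      then have "u \<in> F" using Npos unfolding F_def
        by (intro image_eqI[of _ _ "Y j"]) (auto simp: field_simps)
      then show False using u by simp
    qed
    have teY: "\<forall>j<k. Y k + 2 * real N * u \<noteq> eY j"
    proof (intro allI impI notI)
      fix j assume "j < k" "Y k + 2 * real N * u = eY j"
      then have "u \<in> F" using Npos unfolding F_def
        by (intro image_eqI[of _ _ "eY j"]) (auto simp: field_simps)
      then show False using u by simp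
    qed
    have L: "Lam N (pathn N k T Y) (T k + u) (Y k + 2 * real N * u) =
      card {j. j < k \<and> min (Y j) (eY j) < Y k + 2 * real N * u \<and> Y k + 2 * real N * u < max (Y j) (eY j)} / (2 * real N)"
      using lam_count[OF N mono T0 ev, of u "Y k + 2 * real N * u" Y] u tY teY by (simp add: eY_def)
    have c: "real (card {j. j < k \<and> min (Y j) (eY j) < Y k + 2 * real N * u \<and> Y k + 2 * real N * u < max (Y j) (eY j)})
       = (\<Sum>j<k. indicat_real {a j<..<b j} u)"
    proof -
      have c0: "{j. j < k \<and> min (Y j) (eY j) < Y k + 2 * real N * u \<and> Y k + 2 * real N * u < max (Y j) (eY j)}
         = {j. j < k \<and> u \<in> {a j<..<b j}}" using iff by blast
      show ?thesis unfolding c0 card_filter_sum by (intro sum.cong refl) (simp split: split_indicator)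
    qed
    show ?thesis unfolding rate_def L c g_def A_def using Npos by (simp add: field_simps)
  qed
  have gint: "g integrable_on {0..v}"
  proof -
    have "indicat_real {a j<..<b j} integrable_on {0..v}" for j
      unfolding integrable_on_indicator
      by (rule bounded_set_imp_lmeasurable) (auto intro: bounded_Int)
    then have si: "(\<lambda>u. \<Sum>j<k. indicat_real {a j<..<b j} u) integrable_on {0..v}"
      by (intro integrable_sum) auto
    have c2: "(\<lambda>u. 2 * \<gamma> * (\<Sum>j<k. indicat_real {a j<..<b j} u)) integrable_on {0..v}"
      using integrable_on_cmult_left[OF si, of "2 * \<gamma>"] by simp
    show ?thesis unfolding g_def
      by (rule integrable_add[OF integrable_const_ivl c2])
  qed
  have rint: "(rate has_integral integral {0..v} g) {0..v}"
    by (rule has_integral_spike_finite[OF finF eq integrable_integral[OF gint]])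
  then have ir: "integral {0..v} rate = integral {0..v} g" by (rule integral_unique)
  have gl: "A \<le> g u" for u
  proof -
    have "0 \<le> (\<Sum>j<k. indicat_real {a j<..<b j} u)" by (intro sum_nonneg) simp
    then show ?thesis unfolding g_def using \<gamma> by simp
  qed
  have gu: "g u \<le> C" for u
  proof -
    have "(\<Sum>j<k. indicat_real {a j<..<b j} u) \<le> (\<Sum>j<k. 1)"
      by (intro sum_mono) (simp add: indicator_def)
    then have "(\<Sum>j<k. indicat_real {a j<..<b j} u) \<le> real k" by simp
    then have "2 * \<gamma> * (\<Sum>j<k. indicat_real {a j<..<b j} u) \<le> 2 * \<gamma> * real k"
      using \<gamma> by (intro mult_left_mono) auto
    then show ?thesis unfolding g_def C_def by simp
  qed
  have i1: "integral {0..v} (\<lambda>_. A) \<le> integral {0..v} g"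
    by (rule integral_le[OF integrable_const_ivl gint]) (rule gl)
  have i2: "integral {0..v} g \<le> integral {0..v} (\<lambda>_. C)"
    by (rule integral_le[OF gint integrable_const_ivl]) (rule gu)
  have c1: "integral {0..v} (\<lambda>_. A) = v * A" using v by simp
  have c2: "integral {0..v} (\<lambda>_. C) = v * C" using v by simp
  have r1: "A * v \<le> integral {0..v} rate" using i1 unfolding c1 ir by (simp only: mult.commute)
  have r2: "integral {0..v} rate \<le> C * v" using i2 unfolding c2 ir by (simp only: mult.commute)
  show ?thesis using r1 r2 unfolding A_def C_def by (rule conjI)
qed




lemma up_inc:
  fixes T Y :: "nat \<Rightarrow> real"
  assumes N: "N \<ge> 1" and mono: "\<forall>j<k. T j \<le> T (Suc j)" and T0: "T 0 = 0" and ev: "even k"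
    and \<sigma>: "\<sigma> > 0" and \<gamma>: "\<gamma> \<ge> 0" and e: "0 \<le> e"
  shows "e / ((real N)\<^sup>2 * \<sigma>\<^sup>2 + 2 * \<gamma> * real k) \<le> Inf {u. 0 \<le> u \<and> e \<le> integral {0..u}
     (\<lambda>u. (real N)\<^sup>2 * \<sigma>\<^sup>2 + 4 * \<gamma> * real N * Lam N (pathn N k T Y) (T k + u) (Y k + 2 * real N * u))}"
proof -
  define rate where "rate = (\<lambda>u. (real N)\<^sup>2 * \<sigma>\<^sup>2 + 4 * \<gamma> * real N * Lam N (pathn N k T Y) (T k + u) (Y k + 2 * real N * u))"
  define A where "A = (real N)\<^sup>2 * \<sigma>\<^sup>2"
  define C where "C = A + 2 * \<gamma> * real k"
  have A: "A > 0" using N \<sigma> by (simp add: A_def)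
  have C: "C > 0" using A \<gamma> by (simp add: C_def add_pos_nonneg)
  have RI: "A * v \<le> integral {0..v} rate \<and> integral {0..v} rate \<le> C * v" if "0 \<le> v" for v
    using rate_integral[OF N mono T0 ev \<sigma> \<gamma> that, of Y] unfolding rate_def A_def C_def .
  define W where "W = {u. 0 \<le> u \<and> e \<le> integral {0..u} rate}"
  have ne: "e / A \<in> W"
  proof -
    have "0 \<le> e / A" using e A by simp
    moreover have "A * (e / A) = e" using A by simp
    ultimately show ?thesis using RI[of "e / A"] by (simp add: W_def)
  qed
  have lb: "e / C \<le> u" if "u \<in> W" for u
  proof -
    have "e \<le> C * u" using that RI[of u] by (simp add: W_def)
    then show ?thesis using C by (simp add: divide_le_eq mult.commute)
  qed
  have "e / C \<le> Inf W" using ne lb by (intro cInf_greatest) auto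
  then show ?thesis unfolding W_def rate_def C_def A_def .
qed

lemma step_props:
  assumes N: "N \<ge> 1" and \<sigma>: "\<sigma> > 0" and \<theta>: "\<theta> \<ge> 0" and \<gamma>: "\<gamma> \<ge> 0" and e: "\<forall>k. 0 \<le> e k"
  shows "(\<forall>j<k. Tsw N \<sigma> \<theta> \<gamma> e j \<le> Tsw N \<sigma> \<theta> \<gamma> e (Suc j) \<and>
           Tsw N \<sigma> \<theta> \<gamma> e j + (if even j then e j / ((real N)\<^sup>2 * \<sigma>\<^sup>2 + 2 * \<gamma> * real j) else 0)
             \<le> Tsw N \<sigma> \<theta> \<gamma> e (Suc j))
         \<and> 0 \<le> Ysw N \<sigma> \<theta> \<gamma> e k"
proof (induction k)
  case 0
  then show ?case by (simp add: TY_0)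
next
  case (Suc k)
  define T where "T = Tsw N \<sigma> \<theta> \<gamma> e"
  define Y where "Y = Ysw N \<sigma> \<theta> \<gamma> e"
  have IH: "\<forall>j<k. T j \<le> T (Suc j)" "0 \<le> Y k" using Suc.IH by (auto simp: T_def Y_def)
  have T0: "T 0 = 0" by (simp add: T_def TY_0)
  have rec: "(T (Suc k), Y (Suc k)) = next_pt N \<sigma> \<theta> \<gamma> k T Y (e k)"
    unfolding T_def Y_def by (rule TY_rec)
  have new: "T k \<le> T (Suc k) \<and>
     T k + (if even k then e k / ((real N)\<^sup>2 * \<sigma>\<^sup>2 + 2 * \<gamma> * real k) else 0) \<le> T (Suc k)
     \<and> 0 \<le> Y (Suc k)"
  proof (cases "even k")
    case True
    define w where "w = Inf {u. 0 \<le> u \<and> e k \<le> integral {0..u}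
     (\<lambda>u. (real N)\<^sup>2 * \<sigma>\<^sup>2 + 4 * \<gamma> * real N * Lam N (pathn N k T Y) (T k + u) (Y k + 2 * real N * u))}"
    have wl: "e k / ((real N)\<^sup>2 * \<sigma>\<^sup>2 + 2 * \<gamma> * real k) \<le> w"
      unfolding w_def by (rule up_inc[OF N IH(1) T0 True \<sigma> \<gamma>]) (use e in auto)
    have nn: "0 \<le> e k / ((real N)\<^sup>2 * \<sigma>\<^sup>2 + 2 * \<gamma> * real k)" using e \<gamma> by simp
    have "(T (Suc k), Y (Suc k)) = (T k + w, Y k + 2 * real N * w)"
      unfolding rec next_pt_def w_def using True by (simp add: Let_def)
    then show ?thesis using wl nn True IH(2) by simp
  next
    case False
    define w where "w = min (e k / ((real N)\<^sup>2 * \<sigma>\<^sup>2 + 2 * real N * \<theta>)) (Y k / (2 * real N))"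
    have rd: "0 < (real N)\<^sup>2 * \<sigma>\<^sup>2 + 2 * real N * \<theta>" using N \<sigma> \<theta>
      by (simp add: add_pos_nonneg)
    have w0: "0 \<le> w" using e IH(2) rd N by (simp add: w_def)
    have wY: "2 * real N * w \<le> Y k" using N by (simp add: w_def min_def field_simps)
    have "(T (Suc k), Y (Suc k)) = (T k + w, Y k - 2 * real N * w)"
      unfolding rec next_pt_def w_def using False by (simp add: Let_def)
    then show ?thesis using w0 wY False by simp
  qed
  show ?case using Suc.IH new by (auto simp: T_def Y_def less_Suc_eq)
qed

lemma T_lower:
  assumes N: "N \<ge> 1" and \<sigma>: "\<sigma> > 0" and \<theta>: "\<theta> \<ge> 0" and \<gamma>: "\<gamma> \<ge> 0" and e: "\<forall>k. 0 \<le> e k"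
  shows "(\<Sum>j<n. (if even j then e j / ((real N)\<^sup>2 * \<sigma>\<^sup>2 + 2 * \<gamma> * real j) else 0))
            \<le> Tsw N \<sigma> \<theta> \<gamma> e n"
proof (induction n)
  case 0 then show ?case by (simp add: TY_0)
next
  case (Suc n)
  have "Tsw N \<sigma> \<theta> \<gamma> e n + (if even n then e n / ((real N)\<^sup>2 * \<sigma>\<^sup>2 + 2 * \<gamma> * real n) else 0)
             \<le> Tsw N \<sigma> \<theta> \<gamma> e (Suc n)"
    using step_props[OF assms, of "Suc n"] by simp
  then show ?case using Suc by simp
qed

lemma T_mono:
  assumes N: "N \<ge> 1" and \<sigma>: "\<sigma> > 0" and \<theta>: "\<theta> \<ge> 0" and \<gamma>: "\<gamma> \<ge> 0" and e: "\<forall>k. 0 \<le> e k"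
  shows "mono (Tsw N \<sigma> \<theta> \<gamma> e)"
  proof -
  have "incseq (Tsw N \<sigma> \<theta> \<gamma> e)"
    by (rule incseq_SucI) (use step_props[OF assms] in blast)
  then show ?thesis by simp
qed




lemma S_lim:
  assumes N: "N \<ge> 1" and lim: "filterlim (Tsw N \<sigma> \<theta> \<gamma> e) at_top sequentially"
  shows "((\<lambda>x. S_hit N \<sigma> \<theta> \<gamma> e x) \<longlongrightarrow> \<infinity>) at_top"
proof -
  define T where "T = Tsw N \<sigma> \<theta> \<gamma> e"
  define Y where "Y = Ysw N \<sigma> \<theta> \<gamma> e"
  define H where "H = Hproc N \<sigma> \<theta> \<gamma> e"
  have slnz: "seg_slope N k \<noteq> 0" for k using N by (simp add: seg_slope_def)
  have Npos: "real N > 0" using N by simp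
  show ?thesis unfolding tendsto_PInfty
  proof
    fix r :: real
    define B where "B = max r 0 + 1"
    obtain n0 where n0: "B \<le> T n0"
      using lim unfolding T_def filterlim_at_top by (metis eventually_sequentially order_refl)
    define Zf where "Zf = (\<lambda>k. T k - Y k / seg_slope N k) ` {..n0}"
    have finZ: "finite Zf" by (simp add: Zf_def)
    define K where "K = card Zf"
    have zero_in: "s \<in> Zf" if "s < B" "H s = 0" for s
    proof -
      have ex: "\<exists>n. s < T n" using that n0 by (meson less_le_trans)
      define m where "m = (LEAST n. s < T n)"
      have mle: "m \<le> n0" unfolding m_def by (rule Least_le) (use that n0 in simp)
      have Hs: "H s = pathn N m T Y s" using ex unfolding H_def Hproc_def m_def T_def Y_def by simp
      obtain k where k: "k \<le> m" "pathn N m T Y s = Y k + seg_slope N k * (s - T k)"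
        using pathn_shape by blast
      have "s = T k - Y k / seg_slope N k" using k Hs that(2) slnz[of k]
        by (simp add: field_simps)
      then show ?thesis unfolding Zf_def using k mle by auto
    qed
    have Lam_bd: "Lam N H s 0 \<le> real K / real N" if "s \<le> B" for s
    proof -
      define Zs where "Zs = {r. 0 \<le> r \<and> r < s \<and> H r = 0}"
      have sub: "Zs \<subseteq> Zf" using zero_in that by (auto simp: Zs_def)
      then have finZs: "finite Zs" using finZ finite_subset by blast
      have "(\<Sum>r\<in>Zs. cross_weight H r) \<le> (\<Sum>r\<in>Zs. 2)"
        by (intro sum_mono) (simp add: cross_weight_def)
      also have "\<dots> = 2 * real (card Zs)" by simp
      also have "\<dots> \<le> 2 * real K" unfolding K_def using card_mono[OF finZ sub] by simp
      finally have "(\<Sum>r\<in>Zs. cross_weight H r) \<le> 2 * real K" .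
      then have "(1 / (2 * real N)) * (\<Sum>r\<in>Zs. cross_weight H r) \<le> (1 / (2 * real N)) * (2 * real K)"
        using Npos by (intro mult_left_mono) auto
      then show ?thesis using Npos unfolding Lam_def Zs_def[symmetric] by simp
    qed
    show "\<forall>\<^sub>F x in at_top. ereal r < S_hit N \<sigma> \<theta> \<gamma> e x"
      using eventually_ge_at_top[of "real K + 1"]
    proof eventually_elim
      fix x :: real assume x: "real K + 1 \<le> x"
      have "real K + 1 \<le> real N * x" using x N
        by (smt (verit) mult_le_cancel_right1 of_nat_0_le_iff of_nat_1 of_nat_mono)
      then have fl: "real K + 1 \<le> real_of_int \<lfloor>real N * x\<rfloor>"
        by (metis le_floor_iff of_int_of_nat_eq of_int_1 of_int_add floor_of_int le_floor_add)
      have big: "real K / real N < real_of_int \<lfloor>real N * x\<rfloor> / real N"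
        using fl Npos by (simp add: divide_strict_right_mono)
      have "ereal B \<le> S_hit N \<sigma> \<theta> \<gamma> e x"
        unfolding S_hit_def
      proof (rule Inf_greatest)
        fix z assume "z \<in> ereal ` {s. 0 \<le> s \<and> real_of_int \<lfloor>real N * x\<rfloor> / real N \<le> Lam N (Hproc N \<sigma> \<theta> \<gamma> e) s 0}"
        then obtain s where s: "z = ereal s" "real_of_int \<lfloor>real N * x\<rfloor> / real N \<le> Lam N H s 0"
          unfolding H_def by blast
        have "B \<le> s"
        proof (rule ccontr)
          assume "\<not> B \<le> s"
          then have "Lam N H s 0 \<le> real K / real N" using Lam_bd by simp
          then show False using s big by simp
        qed
        then show "ereal B \<le> z" using s by simp
      qed
      moreover have "ereal r < ereal B" by (simp add: B_def)
      ultimately show "ereal r < S_hit N \<sigma> \<theta> \<gamma> e x" by (meson less_le_trans)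
    qed
  qed
qed




lemma exp_factor_bound:
  fixes c x :: real assumes c: "0 \<le> c" "c \<le> 1"
  shows "exp (- c * max 0 x) \<le> 1 - c / 2 * indicator {1<..} x"
proof (cases "1 < x")
  case True
  have "1 + c \<le> 1 + c * x" using mult_left_mono[of 1 x c] True c by simp
  also have "\<dots> \<le> exp (c * x)" by (rule exp_ge_add_one_self)
  finally have h: "1 + c \<le> exp (c * x)" .
  have "exp (- c * max 0 x) = inverse (exp (c * x))" using True by (simp add: exp_minus)
  also have "\<dots> \<le> inverse (1 + c)" using h c by (intro le_imp_inverse_le) auto
  also have "\<dots> \<le> 1 - c / 2"
  proof -
    have "1 \<le> (1 + c) * (1 - c / 2)" using c by (simp add: algebra_simps power2_eq_square)
      (smt (verit) mult_left_le mult_nonneg_nonneg)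
    then show ?thesis using c by (simp add: inverse_eq_divide divide_le_eq mult.commute)
  qed
  finally show ?thesis using True by simp
next
  case False
  have "- c * max 0 x \<le> 0" using c by (simp add: mult_nonneg_nonneg)
  then show ?thesis using False by simp
qed

context prob_space
begin

lemma sum_exp_div:
  fixes E :: "nat \<Rightarrow> 'a \<Rightarrow> real" and c :: "nat \<Rightarrow> real"
  assumes indep: "indep_vars (\<lambda>_. borel) E UNIV"
    and dist: "\<And>k. distributed M lborel (E k) (\<lambda>x. ennreal (exponential_density 1 x))"
    and c0: "\<And>k. 0 \<le> c k" and c1: "\<And>k. c k \<le> 1" and div: "\<And>m. \<exists>n. m \<le> (\<Sum>k<n. c k)"
  shows "AE \<omega> in M. \<forall>m::nat. \<exists>n. real m < (\<Sum>k<n. c k * max 0 (E k \<omega>))"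
proof -
  have Em[measurable]: "E k \<in> borel_measurable M" for k
    using distributed_measurable[OF dist[of k]] by simp
  define p where "p = exp (- 1 :: real)"
  have p0: "0 < p" by (simp add: p_def)
  define A where "A k = {\<omega> \<in> space M. 1 < E k \<omega>}" for k
  have A_sets: "A k \<in> sets M" for k unfolding A_def by measurable
  have pA: "prob (A k) = p" for k
    using exponential_distributedD_gt[OF dist[of k], of 1] by (simp add: A_def p_def)
  define F where "F k \<omega> = exp (- c k * max 0 (E k \<omega>))" for k \<omega>
  have Fm[measurable]: "F k \<in> borel_measurable M" for k unfolding F_def by measurable
  have F01: "0 \<le> F k \<omega> \<and> F k \<omega> \<le> 1" for k \<omega>
  proof -
    have "- c k * max 0 (E k \<omega>) \<le> 0" using c0[of k] by (simp add: mult_nonneg_nonneg)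
    then show ?thesis by (simp add: F_def)
  qed
  have Fint: "integrable M (F k)" for k
    by (rule integrable_const_bound[where B = 1]) (use F01 in auto)
  have EF: "expectation (F k) \<le> 1 - c k / 2 * p" for k
  proof -
    have ind_int: "integrable M (\<lambda>\<omega>. 1 - c k / 2 * indicator (A k) \<omega>)"
      by (rule integrable_const_bound[where B = "1 + c k"]) (use A_sets c0[of k] in \<open>auto split: split_indicator\<close>)
    have "expectation (F k) \<le> expectation (\<lambda>\<omega>. 1 - c k / 2 * indicator (A k) \<omega>)"
    proof (rule integral_mono[OF Fint ind_int])
      fix \<omega> assume "\<omega> \<in> space M"
      then have "indicator (A k) \<omega> = (indicator {1<..} (E k \<omega>) :: real)"
        by (simp add: A_def indicator_def)
      then show "F k \<omega> \<le> 1 - c k / 2 * indicator (A k) \<omega>"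
        unfolding F_def using exp_factor_bound[OF c0 c1] by simp
    qed
    also have "\<dots> = expectation (\<lambda>\<omega>. 1) - expectation (\<lambda>\<omega>. c k / 2 * indicator (A k) \<omega>)"
    proof (rule Bochner_Integration.integral_diff)
      show "integrable M (\<lambda>\<omega>. c k / 2 * indicator (A k) \<omega>)"
        by (rule integrable_const_bound[where B = "c k"]) (use A_sets c0[of k] in \<open>auto split: split_indicator\<close>)
    qed auto
    also have "\<dots> = 1 - c k / 2 * p"
      using A_sets[of k] pA[of k] by (simp add: prob_space emeasure_eq_measure)
    finally show ?thesis .
  qed
  have EF0: "0 \<le> expectation (F k)" for k using F01 by (simp add: integral_nonneg)
  have indepF: "indep_vars (\<lambda>_. borel) F UNIV"
  proof -
    have "indep_vars (\<lambda>_. borel) (\<lambda>k \<omega>. (\<lambda>k x. exp (- c k * max 0 x)) k (E k \<omega>)) UNIV"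
      by (rule indep_vars_compose2[OF indep]) measurable
    then show ?thesis by (simp add: F_def[abs_def])
  qed
  have prodE: "expectation (\<lambda>\<omega>. \<Prod>k<n. F k \<omega>) \<le> exp (- (\<Sum>k<n. c k * p / 2))" for n
  proof -
    have "expectation (\<lambda>\<omega>. \<Prod>k<n. F k \<omega>) = (\<Prod>k<n. expectation (F k))"
      by (rule indep_vars_lebesgue_integral) (auto intro: indep_vars_subset[OF indepF] Fint)
    also have "\<dots> \<le> (\<Prod>k<n. exp (- (c k * p / 2)))"
    proof (rule prod_mono)
      fix k assume "k \<in> {..<n}"
      have "expectation (F k) \<le> 1 - c k / 2 * p" by (rule EF)
      also have "\<dots> = 1 + (- (c k * p / 2))" by simp
      also have "\<dots> \<le> exp (- (c k * p / 2))" by (rule exp_ge_add_one_self)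
      finally show "0 \<le> expectation (F k) \<and> expectation (F k) \<le> exp (- (c k * p / 2))"
        using EF0 by simp
    qed
    also have "\<dots> = exp (- (\<Sum>k<n. c k * p / 2))"
      by (simp add: exp_sum[symmetric] sum_negf)
    finally show ?thesis .
  qed
  have one: "AE \<omega> in M. \<exists>n. real m < (\<Sum>k<n. c k * max 0 (E k \<omega>))" for m :: nat
  proof -
    define B where "B = {\<omega> \<in> space M. \<forall>n. (\<Sum>k<n. c k * max 0 (E k \<omega>)) \<le> real m}"
    have B_sets: "B \<in> sets M" unfolding B_def by measurable
    have Bbd: "prob B \<le> exp (real m) * exp (- (\<Sum>k<n. c k * p / 2))" for n
    proof -
      have i1: "integrable M (\<lambda>\<omega>. exp (- real m) * indicator B \<omega>)"
        by (rule integrable_const_bound[where B = "exp (- real m)"]) (use B_sets in \<open>auto split: split_indicator\<close>)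
      have i2: "integrable M (\<lambda>\<omega>. \<Prod>k<n. F k \<omega>)"
      proof (rule integrable_const_bound[where B = 1])
        have "\<bar>\<Prod>k<n. F k x\<bar> \<le> 1" for x
        proof -
          have "0 \<le> (\<Prod>k<n. F k x)" using F01 by (simp add: prod_nonneg)
          moreover have "(\<Prod>k<n. F k x) \<le> 1" using F01 by (simp add: prod_le_1)
          ultimately show ?thesis by simp
        qed
        then show "AE x in M. norm (\<Prod>k<n. F k x) \<le> 1" by simp
      qed simp
      have "expectation (\<lambda>\<omega>. exp (- real m) * indicator B \<omega>) \<le> expectation (\<lambda>\<omega>. \<Prod>k<n. F k \<omega>)"
      proof (rule integral_mono[OF i1 i2])
        fix \<omega> assume \<omega>: "\<omega> \<in> space M"
        show "exp (- real m) * indicator B \<omega> \<le> (\<Prod>k<n. F k \<omega>)"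
        proof (cases "\<omega> \<in> B")
          case True
          then have "(\<Sum>k<n. c k * max 0 (E k \<omega>)) \<le> real m" by (simp add: B_def)
          then have "exp (- real m) \<le> exp (- (\<Sum>k<n. c k * max 0 (E k \<omega>)))" by simp
          also have "\<dots> = (\<Prod>k<n. F k \<omega>)"
            by (simp add: F_def exp_sum[symmetric] sum_negf)
          finally show ?thesis using True by simp
        next
          case False
          then show ?thesis using F01 by (simp add: prod_nonneg)
        qed
      qed
      then have "exp (- real m) * prob B \<le> exp (- (\<Sum>k<n. c k * p / 2))"
        using prodE[of n] B_sets by simp
      then have "exp (real m) * (exp (- real m) * prob B) \<le> exp (real m) * exp (- (\<Sum>k<n. c k * p / 2))"
        by (intro mult_left_mono) auto
      then show ?thesis by (simp add: exp_minus field_simps)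
    qed
    have B0: "prob B = 0"
    proof (rule ccontr)
      assume "prob B \<noteq> 0"
      then have q: "0 < prob B" by (simp add: less_le)
      obtain n where n: "2 / p * (real m - ln (prob B) + 1) \<le> (\<Sum>k<n. c k)" using div by blast
      have "(\<Sum>k<n. c k * p / 2) = p / 2 * (\<Sum>k<n. c k)" by (simp add: sum_distrib_left algebra_simps)
      also have "\<dots> \<ge> p / 2 * (2 / p * (real m - ln (prob B) + 1))"
        using n p0 by (intro mult_left_mono) auto
      finally have "real m - ln (prob B) + 1 \<le> (\<Sum>k<n. c k * p / 2)" using p0 by simp
      then have "real m + (- (\<Sum>k<n. c k * p / 2)) < ln (prob B)" by simp
      then have "exp (real m + (- (\<Sum>k<n. c k * p / 2))) < exp (ln (prob B))" by simp
      then have "exp (real m) * exp (- (\<Sum>k<n. c k * p / 2)) < prob B" using q by (simp only: exp_add exp_ln)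
      then show False using Bbd[of n] by simp
    qed
    have "prob (space M - B) = 1" using prob_compl[OF B_sets] B0 by simp
    then have "AE \<omega> in M. \<omega> \<in> space M - B" by (rule AE_prob_1)
    then show ?thesis by eventually_elim (auto simp: B_def not_le)
  qed
  then show ?thesis by (simp add: AE_all_countable)
qed

lemma exp_pos_AE:
  fixes E :: "nat \<Rightarrow> 'a \<Rightarrow> real"
  assumes dist: "\<And>k. distributed M lborel (E k) (\<lambda>x. ennreal (exponential_density 1 x))"
  shows "AE \<omega> in M. \<forall>k. 0 < E k \<omega>"
proof -
  have "AE \<omega> in M. 0 < E k \<omega>" for k
  proof -
    have "prob {\<omega> \<in> space M. 0 < E k \<omega>} = 1"
      using exponential_distributedD_gt[OF dist[of k], of 0] by simp
    then have "AE \<omega> in M. \<omega> \<in> {\<omega> \<in> space M. 0 < E k \<omega>}" by (rule AE_prob_1)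
    then show ?thesis by eventually_elim simp
  qed
  then show ?thesis by (simp add: AE_all_countable)
qed

end




lemma c_div:
  fixes A \<gamma> :: real
  assumes A: "A > 0" and \<gamma>: "\<gamma> \<ge> 0"
  shows "\<exists>n. m \<le> (\<Sum>k<n. (if even k then min 1 (1 / (A + 2 * \<gamma> * real k)) else 0))"
proof -
  define c where "c k = (if even k then min 1 (1 / (A + 2 * \<gamma> * real k)) else (0::real))" for k
  define D where "D = A + 2 * \<gamma> + 1"
  have D: "D \<ge> 1" using A \<gamma> by (simp add: D_def)
  have c0: "0 \<le> c k" for k using A \<gamma> by (simp add: c_def)
  have ce: "1 / (2 * D) * inverse (real (Suc i)) \<le> c (2 * i)" for i
  proof -
    have "A + 2 * \<gamma> * real (2 * i) \<le> D * (real (2 * i) + 1)"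
    proof -
      define x where "x = real (2 * i)"
      have x0: "0 \<le> x" by (simp add: x_def)
      have e1: "D * (x + 1) = A * x + A + 2 * \<gamma> * x + 2 * \<gamma> + x + 1"
        by (simp add: D_def algebra_simps)
      have "0 \<le> A * x" using A x0 by simp
      then show ?thesis unfolding x_def[symmetric] e1 using \<gamma> x0 by linarith
    qed
    moreover have p1: "0 < A + 2 * \<gamma> * real (2 * i)" using A \<gamma> by (simp add: add_pos_nonneg)
    moreover have p2: "0 < D * (real (2 * i) + 1)" using D by simp
    ultimately have "1 / (D * (real (2 * i) + 1)) \<le> 1 / (A + 2 * \<gamma> * real (2 * i))"
      by (intro divide_left_mono) (auto intro: mult_pos_pos)
    moreover have "1 / (D * (real (2 * i) + 1)) \<le> 1"
    proof -
      have "1 * 1 \<le> D * (real (2 * i) + 1)" using D by (intro mult_mono) auto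
      then show ?thesis by simp
    qed
    moreover have "1 / (2 * D) * inverse (real (Suc i)) \<le> 1 / (D * (real (2 * i) + 1))"
    proof -
      have q1: "D * (real (2 * i) + 1) \<le> D * (2 * real (Suc i))" using D by (intro mult_left_mono) auto
      have q2: "0 < D * (real (2 * i) + 1)" using D by simp
      have "1 / (2 * D) * inverse (real (Suc i)) = 1 / (D * (2 * real (Suc i)))"
        by (simp add: field_simps)
      also have "\<dots> \<le> 1 / (D * (real (2 * i) + 1))"
        using q1 q2 by (intro divide_left_mono) (auto intro: mult_pos_pos)
      finally show ?thesis .
    qed
    ultimately show ?thesis by (simp add: c_def)
  qed
  have split: "(\<Sum>i<n. c (2 * i)) \<le> (\<Sum>k<2 * n. c k)" for n
  proof (induction n)
    case 0 then show ?case by (simp only: lessThan_0 sum.empty mult_0_right order_refl)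
  next
    case (Suc n)
    have t: "2 * Suc n = Suc (Suc (2 * n))" by simp
    have "(\<Sum>k<2 * Suc n. c k) = (\<Sum>k<2 * n. c k) + c (2 * n) + c (Suc (2 * n))"
      unfolding t by (simp only: sum.lessThan_Suc)
    moreover have "(\<Sum>i<Suc n. c (2 * i)) = (\<Sum>i<n. c (2 * i)) + c (2 * n)"
      by (simp only: sum.lessThan_Suc)
    ultimately show ?case using Suc.IH c0[of "Suc (2 * n)"] by linarith
  qed
  have "eventually (\<lambda>n. 2 * D * m \<le> harm n) sequentially"
    using harm_at_top unfolding filterlim_at_top by (rule allE)
  then obtain n where n: "2 * D * m \<le> harm n" unfolding eventually_sequentially by auto
  have h1: "(\<Sum>i<n. 1 / (2 * D) * inverse (real (Suc i))) = 1 / (2 * D) * harm n"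
    by (simp only: harm_altdef sum_distrib_left)
  have h2: "1 / (2 * D) * (2 * D * m) \<le> 1 / (2 * D) * harm n"
    using n D by (intro mult_left_mono) auto
  have h3: "1 / (2 * D) * (2 * D * m) = m" using D by simp
  have h4: "(\<Sum>i<n. 1 / (2 * D) * inverse (real (Suc i))) \<le> (\<Sum>i<n. c (2 * i))"
    by (intro sum_mono ce)
  have h5: "m \<le> (\<Sum>i<n. c (2 * i))" using h1 h2 h3 h4 by linarith
  have "m \<le> (\<Sum>k<2 * n. c k)" using h5 split[of n] by linarith
  then have fin: "m \<le> (\<Sum>k<2 * n. c k)" .
  show ?thesis by (rule exI[of _ "2 * n"]) (use fin in \<open>simp only: c_def\<close>)
qed

theorem lemma4:
  fixes M :: "'a measure" and E :: "nat \<Rightarrow> 'a \<Rightarrow> real"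
    and N :: nat and \<sigma> \<theta> \<gamma> :: real
  assumes "prob_space M"
    and "N \<ge> 1" and "\<sigma> > 0" and "\<theta> \<ge> 0" and "\<gamma> \<ge> 0"
    and "prob_space.indep_vars M (\<lambda>_. borel) E UNIV"
    and "\<And>k. distributed M lborel (E k) (exponential_density 1)"
  shows "AE \<omega> in M. filterlim (Tsw N \<sigma> \<theta> \<gamma> (\<lambda>k. E k \<omega>)) at_top sequentially
                  \<and> ((\<lambda>x. S_hit N \<sigma> \<theta> \<gamma> (\<lambda>k. E k \<omega>) x) \<longlongrightarrow> \<infinity>) at_top"
proof -
  note PS = assms(1)
  define A where "A = (real N)\<^sup>2 * \<sigma>\<^sup>2"
  have A: "A > 0" using assms by (simp add: A_def)
  define c where "c k = (if even k then min 1 (1 / (A + 2 * \<gamma> * real k)) else 0)" for k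
  have c0: "0 \<le> c k" for k using A assms by (simp add: c_def)
  have c1: "c k \<le> 1" for k by (simp add: c_def)
  have div: "\<exists>n. m \<le> (\<Sum>k<n. c k)" for m
    unfolding c_def by (rule c_div[OF A assms(5)])
  have AE1: "AE \<omega> in M. \<forall>m::nat. \<exists>n. real m < (\<Sum>k<n. c k * max 0 (E k \<omega>))"
    by (rule prob_space.sum_exp_div[OF PS assms(6) assms(7) c0 c1 div])
  have AE2: "AE \<omega> in M. \<forall>k. 0 < E k \<omega>"
    by (rule prob_space.exp_pos_AE[OF PS assms(7)])
  show ?thesis using AE1 AE2
  proof eventually_elim
    fix \<omega> assume H1: "\<forall>m::nat. \<exists>n. real m < (\<Sum>k<n. c k * max 0 (E k \<omega>))"
      and H2: "\<forall>k. 0 < E k \<omega>"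
    define e where "e k = E k \<omega>" for k
    have e0: "\<forall>k. 0 \<le> e k" using H2 by (simp add: e_def less_imp_le)
    have mono: "mono (Tsw N \<sigma> \<theta> \<gamma> e)" by (rule T_mono[OF assms(2-5) e0])
    have low: "(\<Sum>k<n. c k * max 0 (E k \<omega>)) \<le> Tsw N \<sigma> \<theta> \<gamma> e n" for n
    proof -
      have "(\<Sum>k<n. c k * max 0 (E k \<omega>)) \<le> (\<Sum>j<n. (if even j then e j / ((real N)\<^sup>2 * \<sigma>\<^sup>2 + 2 * \<gamma> * real j) else 0))"
      proof (rule sum_mono)
        fix j assume "j \<in> {..<n}"
        have mx: "max 0 (E j \<omega>) = e j" using H2 by (simp add: e_def)
        show "c j * max 0 (E j \<omega>) \<le> (if even j then e j / ((real N)\<^sup>2 * \<sigma>\<^sup>2 + 2 * \<gamma> * real j) else 0)"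
        proof (cases "even j")
          case True
          have "c j \<le> 1 / (A + 2 * \<gamma> * real j)" using True by (simp add: c_def)
          then have "c j * e j \<le> 1 / (A + 2 * \<gamma> * real j) * e j" using e0 by (intro mult_right_mono) auto
          then show ?thesis using True mx by (simp add: A_def)
        next
          case False then show ?thesis by (simp add: c_def)
        qed
      qed
      also have "\<dots> \<le> Tsw N \<sigma> \<theta> \<gamma> e n" by (rule T_lower[OF assms(2-5) e0])
      finally show ?thesis .
    qed
    have lim: "filterlim (Tsw N \<sigma> \<theta> \<gamma> e) at_top sequentially"
      unfolding filterlim_at_top eventually_sequentially
    proof
      fix Z :: real
      obtain n0 where "real (nat \<lceil>Z\<rceil>) < (\<Sum>k<n0. c k * max 0 (E k \<omega>))" using H1 by blast
      moreover have "Z \<le> real (nat \<lceil>Z\<rceil>)" by (rule real_nat_ceiling_ge)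
      ultimately have Zle: "Z \<le> Tsw N \<sigma> \<theta> \<gamma> e n0" using low[of n0] by linarith
      show "\<exists>n0. \<forall>n\<ge>n0. Z \<le> Tsw N \<sigma> \<theta> \<gamma> e n"
      proof (intro exI allI impI)
        fix n assume "n0 \<le> n"
        then have "Tsw N \<sigma> \<theta> \<gamma> e n0 \<le> Tsw N \<sigma> \<theta> \<gamma> e n" by (rule monoD[OF mono])
        then show "Z \<le> Tsw N \<sigma> \<theta> \<gamma> e n" using Zle by (rule order_trans[rotated])
      qed
    qed
    have "((\<lambda>x. S_hit N \<sigma> \<theta> \<gamma> e x) \<longlongrightarrow> \<infinity>) at_top" by (rule S_lim[OF assms(2) lim])
    moreover have eeq: "(\<lambda>k. E k \<omega>) = e" unfolding e_def by (rule refl)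
    ultimately show "filterlim (Tsw N \<sigma> \<theta> \<gamma> (\<lambda>k. E k \<omega>)) at_top sequentially
                  \<and> ((\<lambda>x. S_hit N \<sigma> \<theta> \<gamma> (\<lambda>k. E k \<omega>) x) \<longlongrightarrow> \<infinity>) at_top"
      using lim by simp
  qed
qed


end
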